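(* Let $F$ be a Pythagorean formally real field with finitely many orderings, let $\sigma_1,\dots,\sigma_n\in X_F$ form a basis (i.e. their characters form a basis of $\chi(\dot F/\dot F^2)$ and every element of $X_F$ is a product of an odd number of them), and let $\tau\in\mathcal G_F$ be such that $\chi_\tau\sigma_i\in X_F$ for all $i=1,\dots,n$. Then $\chi_\tau X_F=X_F$.
   Context: $F$ has characteristic $0$; Pythagorean: every sum of two squares is a square; formally real: $-1$ is not a sum of squares. $\mathcal G_F=\mathrm{Gal}(F^{(3)}/F)$ is the W-group, where $F^{(2)}=F(\sqrt a:a\in\dot F)$ and $F^{(3)}$ is the compositum of all quadratic extensions $K$ of $F^{(2)}$ with $K/F$ Galois. $X_F$ is the set of orderings of $F$, each ordering $P$ identified with its signature character $\operatorname{sgn}_P\in\chi(\dot F/\dot F^2)=\mathrm{Hom}(\dot F/\dot F^2,\{\pm1\})$ ($\operatorname{sgn}_P(a)=1$ iff $a\in P$). For $\tau\in\mathcal G_F$, $\chi_\tau\in\chi(\dot F/\dot F^2)$ is the character $a\mapsto\tau(\sqrt a)/\sqrt a$; products of characters are pointwise. *)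

theory Defs
  imports Main
begin

definition is_ordering :: "'a::field set \<Rightarrow> bool" where
  "is_ordering P \<longleftrightarrow>
     (\<forall>x\<in>P. \<forall>y\<in>P. x + y \<in> P \<and> x * y \<in> P) \<and>
     (\<forall>x. x \<in> P \<or> - x \<in> P) \<and>
     (\<forall>x. x \<in> P \<and> - x \<in> P \<longrightarrow> x = 0)"

text \<open>They are normalised to the value 1 at 0 so that they are
  determined by their values on nonzero elements.  (Multiplicativity forces triviality
  on squares, so these are exactly the characters of the multiplicative group modulo squares.)\<close>
definition sq_char :: "('a::field \<Rightarrow> int) \<Rightarrow> bool" where
  "sq_char c \<longleftrightarrow> (\<forall>a. c a = 1 \<or> c a = -1) \<and> c 0 = 1 \<and>
     (\<forall>a b. a \<noteq> 0 \<longrightarrow> b \<noteq> 0 \<longrightarrow> c (a * b) = c a * c b)"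

definition sgn_ord :: "'a::field set \<Rightarrow> 'a \<Rightarrow> int" where
  "sgn_ord P a = (if a \<noteq> 0 \<and> a \<notin> P then -1 else 1)"

definition X_F :: "('a::field \<Rightarrow> int) set" where
  "X_F = {sgn_ord P | P. is_ordering P}"

definition char_mult :: "('a \<Rightarrow> int) \<Rightarrow> ('a \<Rightarrow> int) \<Rightarrow> 'a \<Rightarrow> int" where
  "char_mult c d = (\<lambda>a. c a * d a)"

definition char_prod :: "(nat \<Rightarrow> 'a \<Rightarrow> int) \<Rightarrow> nat set \<Rightarrow> 'a \<Rightarrow> int" where
  "char_prod \<sigma> S = (\<lambda>a. \<Prod>i\<in>S. \<sigma> i a)"

definition pythagorean :: "'a::field itself \<Rightarrow> bool" where
  "pythagorean _ \<longleftrightarrow> (\<forall>a b :: 'a. \<exists>c. a\<^sup>2 + b\<^sup>2 = c\<^sup>2)"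

definition formally_real :: "'a::field itself \<Rightarrow> bool" where
  "formally_real _ \<longleftrightarrow> \<not> (\<exists>xs :: 'a list. - 1 = sum_list (map (\<lambda>x. x\<^sup>2) xs))"

definition ord_basis :: "(nat \<Rightarrow> 'a::field \<Rightarrow> int) \<Rightarrow> nat \<Rightarrow> bool" where
  "ord_basis \<sigma> n \<longleftrightarrow>
     (\<forall>i<n. \<sigma> i \<in> X_F) \<and>
     (\<forall>c. sq_char c \<longrightarrow> (\<exists>!S. S \<subseteq> {..<n} \<and> c = char_prod \<sigma> S)) \<and>
     (\<forall>x\<in>X_F. \<exists>S. S \<subseteq> {..<n} \<and> odd (card S) \<and> x = char_prod \<sigma> S)"

end

theory Submission
  imports Defs
begin

definition ordchar :: "('a::field \<Rightarrow> int) \<Rightarrow> bool" where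
  "ordchar c \<longleftrightarrow> sq_char c \<and> c (-1) = -1 \<and> (\<forall>u. c u = 1 \<longrightarrow> c (1 + u) = 1)"

lemma ordering_basic:
  assumes "is_ordering (P::'a::field set)"
  shows "1 \<in> P" "-1 \<notin> P" "0 \<in> P"
proof -
  have add: "\<And>x y. x \<in> P \<Longrightarrow> y \<in> P \<Longrightarrow> x + y \<in> P"
   and mul: "\<And>x y. x \<in> P \<Longrightarrow> y \<in> P \<Longrightarrow> x * y \<in> P"
   and tot: "\<And>x. x \<in> P \<or> - x \<in> P"
   and anti: "\<And>x. x \<in> P \<Longrightarrow> - x \<in> P \<Longrightarrow> x = 0"
    using assms unfolding is_ordering_def by blast+
  show one: "1 \<in> P"
    using tot[of 1] mul[of "-1" "-1"] by auto
  show "-1 \<notin> P" using anti[of 1] one by auto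
  show "0 \<in> P" using tot[of 0] by auto
qed

lemma sgn_ord_ordchar:
  assumes "is_ordering (P::'a::field set)"
  shows "ordchar (sgn_ord P)"
proof -
  have add: "\<And>x y. x \<in> P \<Longrightarrow> y \<in> P \<Longrightarrow> x + y \<in> P"
   and mul: "\<And>x y. x \<in> P \<Longrightarrow> y \<in> P \<Longrightarrow> x * y \<in> P"
   and tot: "\<And>x. x \<in> P \<or> - x \<in> P"
   and anti: "\<And>x. x \<in> P \<Longrightarrow> - x \<in> P \<Longrightarrow> x = 0"
    using assms unfolding is_ordering_def by blast+
  note b = ordering_basic[OF assms]
  have m: "sgn_ord P (a * b) = sgn_ord P a * sgn_ord P b" if "a \<noteq> 0" "b \<noteq> 0" for a b
  proof (cases "a \<in> P")
    case True
    show ?thesis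
    proof (cases "b \<in> P")
      case True with \<open>a \<in> P\<close> show ?thesis using mul that by (simp add: sgn_ord_def)
    next
      case False
      then have "-b \<in> P" using tot by blast
      have "a * b \<notin> P"
      proof
        assume "a * b \<in> P"
        moreover have "a * (-b) \<in> P" using mul \<open>a \<in> P\<close> \<open>-b \<in> P\<close> by blast
        ultimately have "a * b = 0" using anti[of "a * b"] by simp
        then show False using that by simp
      qed
      then show ?thesis using True False that by (simp add: sgn_ord_def)
    qed
  next
    case False
    then have na: "-a \<in> P" using tot by blast
    show ?thesis
    proof (cases "b \<in> P")
      case True
      have "a * b \<notin> P"
      proof
        assume "a * b \<in> P"
        moreover have "(-a) * b \<in> P" using mul na True by blast
        ultimately have "a * b = 0" using anti[of "a * b"] by simp
        then show False using that by simp
      qed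
      then show ?thesis using True False that by (simp add: sgn_ord_def)
    next
      case False2: False
      then have "-b \<in> P" using tot by blast
      then have "(-a) * (-b) \<in> P" using mul na by blast
      then show ?thesis using False False2 that by (simp add: sgn_ord_def)
    qed
  qed
  have "sq_char (sgn_ord P)"
    unfolding sq_char_def using m by (auto simp: sgn_ord_def)
  moreover have "sgn_ord P (-1) = -1" using b by (simp add: sgn_ord_def)
  moreover have "sgn_ord P (1 + u) = 1" if "sgn_ord P u = 1" for u
  proof -
    have "u \<in> P" using that b by (auto simp: sgn_ord_def split: if_splits)
    then have "1 + u \<in> P" using add b by blast
    then show ?thesis by (simp add: sgn_ord_def)
  qed
  ultimately show ?thesis unfolding ordchar_def by blast
qed

lemma ordchar_in_X:
  assumes "ordchar (c::'a::field \<Rightarrow> int)"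
  shows "c \<in> X_F"
proof -
  have sq: "sq_char c" and m1: "c (-1) = -1" and st: "\<And>u. c u = 1 \<Longrightarrow> c (1 + u) = 1"
    using assms unfolding ordchar_def by blast+
  have pm: "\<And>a. c a = 1 \<or> c a = -1" and c0: "c 0 = 1"
    and mult: "\<And>a b. a \<noteq> 0 \<Longrightarrow> b \<noteq> 0 \<Longrightarrow> c (a * b) = c a * c b"
    using sq unfolding sq_char_def by blast+
  have c1: "c 1 = 1" using mult[of 1 1] pm[of 1] by auto
  have cinv: "c (inverse x) = c x" if "x \<noteq> 0" for x
  proof -
    have "c x * c (inverse x) = 1" using mult[of x "inverse x"] that c1 by simp
    then show ?thesis using pm[of x] pm[of "inverse x"] by auto
  qed
  define P where "P = {a. c a = 1}"
  have neg: "c (-x) = - c x" if "x \<noteq> 0" for x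
    using mult[of "-1" x] m1 that by simp
  have "is_ordering P"
    unfolding is_ordering_def
  proof (intro conjI allI ballI impI)
    fix x y assume x: "x \<in> P" and y: "y \<in> P"
    show "x * y \<in> P"
      using x y c0 mult[of x y] by (cases "x = 0"; cases "y = 0"; simp add: P_def)
    show "x + y \<in> P"
    proof (cases "x = 0")
      case True then show ?thesis using y by simp
    next
      case False
      have "c (y * inverse x) = 1"
        using x y False c0 mult[of y "inverse x"] cinv[of x] by (cases "y = 0"; simp add: P_def)
      then have h: "c (1 + y * inverse x) = 1" by (rule st)
      have e: "x + y = x * (1 + y * inverse x)" using False by (simp add: field_simps)
      show ?thesis
      proof (cases "1 + y * inverse x = 0")
        case True then show ?thesis using e c0 by (simp add: P_def)
      next
        case False2: False
        show ?thesis using e mult[OF False False2] h x by (simp add: P_def)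
      qed
    qed
  next
    fix x
    show "x \<in> P \<or> - x \<in> P"
      using neg[of x] pm[of x] c0 by (cases "x = 0") (auto simp: P_def)
  next
    fix x assume "x \<in> P \<and> - x \<in> P"
    then show "x = 0" using neg[of x] by (auto simp: P_def)
  qed
  moreover have "sgn_ord P = c"
  proof
    fix a show "sgn_ord P a = c a"
      using pm[of a] c0 by (auto simp: sgn_ord_def P_def)
  qed
  ultimately have "c = sgn_ord P \<and> is_ordering P" by simp
  then have "\<exists>P. c = sgn_ord P \<and> is_ordering P" by (rule exI)
  then show ?thesis unfolding X_F_def by blast
qed

lemma X_F_iff: "c \<in> X_F \<longleftrightarrow> ordchar (c::'a::field \<Rightarrow> int)"
proof
  assume "c \<in> X_F"
  then obtain P where "is_ordering P" "c = sgn_ord P" unfolding X_F_def by blast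
  then show "ordchar c" using sgn_ord_ordchar by blast
qed (rule ordchar_in_X)

lemma prod_mult_const:
  fixes f :: "nat \<Rightarrow> int"
  shows "(\<Prod>i\<in>S. k * f i) = k ^ card S * (\<Prod>i\<in>S. f i)"
  by (simp add: prod.distrib)

theorem lemma3p4:
  fixes \<sigma> :: "nat \<Rightarrow> 'a::field_char_0 \<Rightarrow> int" and n :: nat and \<chi> :: "'a \<Rightarrow> int"
  assumes "pythagorean TYPE('a)"
    and "formally_real TYPE('a)"
    and "finite {P :: 'a set. is_ordering P}"
    and "ord_basis \<sigma> n"
    and "sq_char \<chi>"
    and "\<forall>i<n. char_mult \<chi> (\<sigma> i) \<in> X_F"
  shows "char_mult \<chi> ` X_F = (X_F :: ('a \<Rightarrow> int) set)"
proof -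
  note ob = assms(4)[unfolded ord_basis_def]
  have ob1: "\<forall>i<n. \<sigma> i \<in> X_F" by (rule conjunct1[OF ob])
  have ob3: "\<forall>x\<in>X_F. \<exists>S. S \<subseteq> {..<n} \<and> odd (card S) \<and> x = char_prod \<sigma> S"
    by (rule conjunct2[OF conjunct2[OF ob]])
  have sig: "\<And>i. i < n \<Longrightarrow> ordchar (\<sigma> i)"
    using ob1 X_F_iff by blast
  have ysig: "\<And>i. i < n \<Longrightarrow> ordchar (char_mult \<chi> (\<sigma> i))"
    using assms(6) X_F_iff by blast
  have odd_rep: "\<And>x. x \<in> X_F \<Longrightarrow> \<exists>S. S \<subseteq> {..<n} \<and> odd (card S) \<and> x = char_prod \<sigma> S"
    using ob3 by blast
  have chipm: "\<And>a. \<chi> a = 1 \<or> \<chi> a = -1" and chi0: "\<chi> 0 = 1"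
    and chimult: "\<And>a b. a \<noteq> 0 \<Longrightarrow> b \<noteq> 0 \<Longrightarrow> \<chi> (a * b) = \<chi> a * \<chi> b"
    using assms(5) unfolding sq_char_def by blast+
  have key: "char_mult \<chi> x \<in> X_F" if xX: "x \<in> X_F" for x :: "'a \<Rightarrow> int"
  proof -
    obtain S where S: "S \<subseteq> {..<n}" "odd (card S)" "x = char_prod \<sigma> S"
      using odd_rep[OF xX] by blast
    have finS: "finite S" using S(1) finite_subset by blast
    have "S \<noteq> {}" using S(2) by auto
    then obtain i0 where i0: "i0 \<in> S" by blast
    have sS: "\<And>i. i \<in> S \<Longrightarrow> ordchar (\<sigma> i)" using sig S(1) by blast
    have yS: "\<And>i. i \<in> S \<Longrightarrow> ordchar (char_mult \<chi> (\<sigma> i))" using ysig S(1) by blast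
    have xo: "ordchar x" using xX X_F_iff by blast
    have xval: "\<And>a. x a = (\<Prod>i\<in>S. \<sigma> i a)" using S(3) by (simp add: char_prod_def)
    have spm: "\<And>i a. i \<in> S \<Longrightarrow> \<sigma> i a = 1 \<or> \<sigma> i a = -1"
      using sS unfolding ordchar_def sq_char_def by blast
    have sstep: "\<And>i u. i \<in> S \<Longrightarrow> \<sigma> i u = 1 \<Longrightarrow> \<sigma> i (1 + u) = 1"
      using sS unfolding ordchar_def by blast
    have ystep: "\<And>i u. i \<in> S \<Longrightarrow> \<chi> u * \<sigma> i u = 1 \<Longrightarrow> \<chi> (1 + u) * \<sigma> i (1 + u) = 1"
      using yS unfolding ordchar_def char_mult_def by blast
    have xpm: "\<And>a. x a = 1 \<or> x a = -1" and xm1: "x (-1) = -1"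
      and xstep: "\<And>u. x u = 1 \<Longrightarrow> x (1 + u) = 1"
      using xo unfolding ordchar_def sq_char_def by blast+
    obtain m where cm: "card S = Suc (2 * m)" using S(2) oddE by (metis Suc_eq_plus1)
    have oddpow: "(k::int) ^ card S = k" if "k = 1 \<or> k = -1" for k
    proof -
      have "k * k = 1" using that by auto
      then have "k ^ (2 * m) = 1" by (simp add: power_mult power2_eq_square)
      then show ?thesis using cm by simp
    qed
    have chim1: "\<chi> (-1) = 1"
    proof -
      have "char_mult \<chi> (\<sigma> i0) (-1) = -1" using yS[OF i0] unfolding ordchar_def by blast
      then have "\<chi> (-1) * \<sigma> i0 (-1) = -1" by (simp add: char_mult_def)
      moreover have "\<sigma> i0 (-1) = -1" using sS[OF i0] unfolding ordchar_def by blast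
      ultimately show ?thesis by simp
    qed
    have sqc: "sq_char (char_mult \<chi> x)"
      unfolding sq_char_def char_mult_def
    proof (intro conjI allI impI)
      fix a show "\<chi> a * x a = 1 \<or> \<chi> a * x a = -1" using chipm[of a] xpm[of a] by auto
    next
      show "\<chi> 0 * x 0 = 1" using chi0 xo unfolding ordchar_def sq_char_def by simp
    next
      fix a b :: 'a assume "a \<noteq> 0" "b \<noteq> 0"
      moreover have "x (a * b) = x a * x b" using xo \<open>a \<noteq> 0\<close> \<open>b \<noteq> 0\<close>
        unfolding ordchar_def sq_char_def by blast
      ultimately show "\<chi> (a * b) * x (a * b) = \<chi> a * x a * (\<chi> b * x b)"
        using chimult by (simp add: algebra_simps)
    qed
    have stepc: "\<chi> (1 + u) * x (1 + u) = 1" if cu: "\<chi> u * x u = 1" for u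
    proof -
      let ?b = "1 + u"
      consider "\<chi> u = 1" "\<chi> ?b = 1" | "\<chi> u = 1" "\<chi> ?b = -1"
        | "\<chi> u = -1" "\<chi> ?b = 1" | "\<chi> u = -1" "\<chi> ?b = -1"
        using chipm[of u] chipm[of ?b] by blast
      then show ?thesis
      proof cases
        case 1
        then have "x u = 1" using cu by simp
        then show ?thesis using xstep 1 by simp
      next
        case 2
        then have xu: "x u = 1" using cu by simp
        have "\<sigma> i u = -1" if "i \<in> S" for i
        proof (rule ccontr)
          assume "\<sigma> i u \<noteq> -1"
          then have "\<sigma> i u = 1" using spm that by blast
          moreover have "\<chi> u * \<sigma> i u = 1" using \<open>\<sigma> i u = 1\<close> 2 by simp
          ultimately have "\<sigma> i ?b = 1" "\<chi> ?b * \<sigma> i ?b = 1"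
            using sstep[OF that] ystep[OF that] by blast+
          then show False using 2 by simp
        qed
        then have "x u = (\<Prod>i\<in>S. (-1::int))" using xval by simp
        also have "\<dots> = -1" using oddpow by simp
        finally show ?thesis using xu by simp
      next
        case 3
        have "\<sigma> i ?b = 1" if "i \<in> S" for i
        proof (cases "\<sigma> i u = 1")
          case True then show ?thesis using sstep that by blast
        next
          case False
          then have "\<sigma> i u = -1" using spm that by blast
          then have "\<chi> u * \<sigma> i u = 1" using 3 by simp
          then have "\<chi> ?b * \<sigma> i ?b = 1" using ystep[OF that] by blast
          then show ?thesis using 3 by simp
        qed
        then have "x ?b = 1" using xval by simp
        then show ?thesis using 3 by simp
      next
        case 4
        then have xu: "x u = -1" using cu by simp
        have t: "\<chi> ?b * \<sigma> i ?b = - \<sigma> i u" if "i \<in> S" for i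
        proof (cases "\<sigma> i u = 1")
          case True then have "\<sigma> i ?b = 1" using sstep[OF that] by blast
          then show ?thesis using True 4 by simp
        next
          case False
          then have "\<sigma> i u = -1" using spm that by blast
          then have "\<chi> u * \<sigma> i u = 1" using 4 by simp
          then have "\<chi> ?b * \<sigma> i ?b = 1" using ystep[OF that] by blast
          then show ?thesis using \<open>\<sigma> i u = -1\<close> by simp
        qed
        have "\<chi> ?b * x ?b = \<chi> ?b ^ card S * x ?b" using oddpow chipm by metis
        also have "\<dots> = (\<Prod>i\<in>S. \<chi> ?b * \<sigma> i ?b)" using xval prod_mult_const by metis
        also have "\<dots> = (\<Prod>i\<in>S. (-1) * \<sigma> i u)" using t by (intro prod.cong) auto
        also have "\<dots> = (-1) ^ card S * x u" using xval prod_mult_const by metis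
        also have "\<dots> = 1" using oddpow xu by simp
        finally show ?thesis .
      qed
    qed
    have "ordchar (char_mult \<chi> x)"
      unfolding ordchar_def using sqc chim1 xm1 stepc by (simp add: char_mult_def)
    then show ?thesis using X_F_iff by blast
  qed
  have inv: "char_mult \<chi> (char_mult \<chi> x) = x" for x :: "'a \<Rightarrow> int"
  proof
    fix a show "char_mult \<chi> (char_mult \<chi> x) a = x a"
      using chipm[of a] by (auto simp: char_mult_def)
  qed
  show ?thesis
  proof
    show "char_mult \<chi> ` X_F \<subseteq> X_F" using key by blast
    show "X_F \<subseteq> char_mult \<chi> ` X_F"
    proof
      fix x :: "'a \<Rightarrow> int" assume "x \<in> X_F"
      then have "x = char_mult \<chi> (char_mult \<chi> x)" "char_mult \<chi> x \<in> X_F"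
        using inv key by auto
      then show "x \<in> char_mult \<chi> ` X_F" by blast
    qed
  qed
qed

end
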